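(* Let $G$ be a group and $\rho:G\to \mathrm{Homeo}_+(\mathbb{R})$ an action of $G$ on the real line by order-preserving homeomorphisms. Suppose $\rho$ is semi conjugated to an affine action, i.e. there exist a representation $A:G\to \mathrm{Aff}(\mathbb{R})$ and a non-decreasing map $c:\mathbb{R}\to\mathbb{R}$ whose image $c(\mathbb{R})$ is unbounded in both directions, such that $c\circ\rho(g)=A(g)\circ c$ for all $g\in G$. Then there is a nonzero measure $\mu$ on $\mathbb{R}$ which is quasi-preserved by the action $\rho$ of $G$.
   Context: $\mathrm{Aff}(\mathbb{R})$ denotes the group of affine maps $x\mapsto ax+b$ of $\mathbb{R}$ with $a\neq 0$. The map $c$ is not required to be continuous. For $g\in G$ and a measure $\mu$, $g_*\mu$ is the measure $B\mapsto \mu(\rho(g)^{-1}(B))$. A measure $\mu$ is quasi-preserved by $G$ if for every $g\in G$ there is $\lambda_g\in\mathbb{R}$ with $g_*\mu=\lambda_g\mu$. *)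

theory Defs
  imports "HOL-Analysis.Analysis"
begin

text \<open>Groups are modelled by the type class group_add (written additively, not
necessarily commutative); a group G is the universe of a type 'g.\<close>

definition homeo_plus :: "(real \<Rightarrow> real) \<Rightarrow> bool" where
  "homeo_plus f \<longleftrightarrow> (\<exists>h. homeomorphism UNIV UNIV f h) \<and> strict_mono f"

definition affine_map :: "(real \<Rightarrow> real) \<Rightarrow> bool" where
  "affine_map f \<longleftrightarrow> (\<exists>a b. a \<noteq> 0 \<and> f = (\<lambda>x. a * x + b))"

definition homeo_plus_action :: "('g::group_add \<Rightarrow> real \<Rightarrow> real) \<Rightarrow> bool" where
  "homeo_plus_action \<rho> \<longleftrightarrow> (\<forall>g. homeo_plus (\<rho> g)) \<and> (\<forall>g h. \<rho> (g + h) = \<rho> g \<circ> \<rho> h)"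

definition affine_rep :: "('g::group_add \<Rightarrow> real \<Rightarrow> real) \<Rightarrow> bool" where
  "affine_rep A \<longleftrightarrow> (\<forall>g. affine_map (A g)) \<and> (\<forall>g h. A (g + h) = A g \<circ> A h)"

definition locally_finite_borel_measure :: "real measure \<Rightarrow> bool" where
  "locally_finite_borel_measure \<mu> \<longleftrightarrow> sets \<mu> = sets borel \<and>
     (\<forall>K. compact K \<longrightarrow> emeasure \<mu> K < \<infinity>)"

text \<open>\<mu> is quasi-preserved: for every g there is a real \<lambda> with g_* \<mu> = \<lambda> \<mu>,
where (g_* \<mu>)(B) = \<mu>(\<rho>(g)^{-1}(B)).\<close>
definition quasi_preserved :: "('g \<Rightarrow> real \<Rightarrow> real) \<Rightarrow> real measure \<Rightarrow> bool" where
  "quasi_preserved \<rho> \<mu> \<longleftrightarrow> (\<forall>g. \<exists>l::real. 0 \<le> l \<and>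
     (\<forall>B \<in> sets borel. emeasure \<mu> (\<rho> g -` B) = ennreal l * emeasure \<mu> B))"

end

theory Submission imports Defs begin
lemma aff_meas:
  fixes a b :: real assumes a: "a > 0" and C: "C \<in> sets borel"
  shows "emeasure lborel ((\<lambda>x. a*x+b) -` C) = ennreal (1/a) * emeasure lborel C"
proof -
  have m: "(\<lambda>x. b + a*x) \<in> borel_measurable lborel" by simp
  have "emeasure lborel C = emeasure (density (distr lborel borel (\<lambda>x. b + a * x)) (\<lambda>_. ennreal (abs a))) C"
    using lborel_real_affine[of a b] a by simp
  also have "\<dots> = ennreal a * emeasure lborel ((\<lambda>x. b + a*x) -` C)"
    using C a by (simp add: emeasure_density nn_integral_cmult_indicator emeasure_distr[OF m])
  finally have e: "emeasure lborel C = ennreal a * emeasure lborel ((\<lambda>x. a*x+b) -` C)"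
    by (simp add: add.commute)
  have "ennreal (1/a) * emeasure lborel C = (ennreal (1/a) * ennreal a) * emeasure lborel ((\<lambda>x. a*x+b) -` C)"
    by (simp add: e mult.assoc)
  also have "ennreal (1/a) * ennreal a = 1" using a by (simp flip: ennreal_mult)
  finally show ?thesis by simp
qed
theorem mainTheorem2:
  fixes \<rho> :: "'g::group_add \<Rightarrow> real \<Rightarrow> real"
    and A :: "'g \<Rightarrow> real \<Rightarrow> real"
    and c :: "real \<Rightarrow> real"
  assumes "homeo_plus_action \<rho>"
    and "affine_rep A"
    and "mono c"
    and "\<not> bdd_above (range c)" and "\<not> bdd_below (range c)"
    and "\<forall>g. c \<circ> \<rho> g = A g \<circ> c"
  shows "\<exists>\<mu>. locally_finite_borel_measure \<mu> \<and> emeasure \<mu> UNIV \<noteq> 0 \<and> quasi_preserved \<rho> \<mu>"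
proof -
  have hp: "\<And>g. homeo_plus (\<rho> g)" using assms(1) by (simp add: homeo_plus_action_def)
  have smono: "\<And>g. strict_mono (\<rho> g)" using hp by (simp add: homeo_plus_def)
  have cont: "\<And>g. continuous_on UNIV (\<rho> g)" using hp
    unfolding homeo_plus_def homeomorphism_def by blast
  have surj: "\<And>g. surj (\<rho> g)" using hp
    unfolding homeo_plus_def homeomorphism_def by blast
  have comm: "\<And>g x. c (\<rho> g x) = A g (c x)" using assms(6) by (metis comp_apply)
  have ub: "\<And>y. \<exists>x. y \<le> c x" using assms(4) unfolding bdd_above_def
    by (metis linorder_not_le rangeE less_imp_le)
  have lb: "\<And>y. \<exists>x. c x < y" using assms(5) unfolding bdd_below_def
    by (metis linorder_not_le rangeE)
  have ncst: "\<exists>x1 x2. c x1 < c x2" using ub lb by (meson order_less_le_trans)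
  have aff: "\<exists>a b. a > 0 \<and> A g = (\<lambda>x. a*x+b)" for g
  proof -
    obtain a b where ab: "a \<noteq> 0" "A g = (\<lambda>x. a*x+b)"
      using assms(2) unfolding affine_rep_def affine_map_def by blast
    obtain x1 x2 where x: "c x1 < c x2" using ncst by blast
    have "x1 < x2" using x assms(3) by (metis linorder_not_le monoD leD)
    hence "\<rho> g x1 < \<rho> g x2" using smono by (simp add: strict_mono_less)
    hence "c (\<rho> g x1) \<le> c (\<rho> g x2)" using assms(3) by (simp add: monoD)
    hence "a * c x1 \<le> a * c x2" using comm ab by simp
    hence "a \<ge> 0" using x by (smt (verit) mult_strict_left_mono_neg)
    hence "a > 0" using ab by simp
    thus ?thesis using ab by blast
  qed
  define S where "S y = {x. y \<le> c x}" for y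
  define q where "q y = Inf (S y)" for y
  have Sne: "S y \<noteq> {}" for y using ub[of y] by (auto simp: S_def)
  have Sbdd: "bdd_below (S y)" for y
  proof -
    obtain x0 where "c x0 < y" using lb by blast
    hence "\<forall>x\<in>S y. x0 \<le> x" using assms(3) unfolding S_def
      by (metis linorder_not_le mem_Collect_eq monoD order_le_less_trans less_le_not_le)
    thus ?thesis by (auto simp: bdd_below_def)
  qed
  have qmono: "mono q"
  proof
    fix y y' :: real assume "y \<le> y'"
    hence "S y' \<subseteq> S y" by (auto simp: S_def)
    thus "q y \<le> q y'" unfolding q_def using Sne Sbdd by (meson cInf_superset_mono)
  qed
  have key: "q (A g y) = \<rho> g (q y)" for g y
  proof -
    obtain a b where ab: "a > 0" "A g = (\<lambda>x. a*x+b)" using aff by blast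
    have "S (A g y) = \<rho> g ` S y"
    proof (intro set_eqI iffI)
      fix x assume "x \<in> S (A g y)"
      obtain x' where x': "x = \<rho> g x'" using surj by (metis surjD)
      have "a*y+b \<le> a * c x' + b" using \<open>x \<in> S (A g y)\<close> comm[of g x'] ab x' by (simp add: S_def)
      hence "y \<le> c x'" using ab by simp
      thus "x \<in> \<rho> g ` S y" using x' by (auto simp: S_def)
    next
      fix x assume "x \<in> \<rho> g ` S y"
      then obtain x' where x': "x = \<rho> g x'" "y \<le> c x'" by (auto simp: S_def)
      have "a*y+b \<le> a * c x' + b" using x' ab by simp
      thus "x \<in> S (A g y)" using comm[of g x'] ab x' by (simp add: S_def)
    qed
    moreover have "\<rho> g (Inf (S y)) = (INF s\<in>S y. \<rho> g s)"
      by (rule continuous_at_Inf_mono)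
        (use smono cont Sne Sbdd in \<open>auto simp: strict_mono_mono intro: continuous_on_imp_continuous_within[of UNIV] continuous_within_subset\<close>)
    ultimately show ?thesis by (simp add: q_def)
  qed
  have qm: "q \<in> borel_measurable lborel" using borel_measurable_mono[OF qmono] by simp
  define \<mu> where "\<mu> = distr lborel borel q"
  have em: "emeasure \<mu> B = emeasure lborel (q -` B)" if "B \<in> sets borel" for B
    unfolding \<mu>_def using emeasure_distr[OF qm that] by simp
  have rm: "\<rho> g \<in> borel_measurable borel" for g
    using cont by (simp add: continuous_on_imp_continuous_within borel_measurable_continuous_onI)
  have qp: "quasi_preserved \<rho> \<mu>"
    unfolding quasi_preserved_def
  proof
    fix g
    obtain a b where ab: "a > 0" "A g = (\<lambda>x. a*x+b)" using aff by blast
    show "\<exists>l::real. 0 \<le> l \<and> (\<forall>B \<in> sets borel. emeasure \<mu> (\<rho> g -` B) = ennreal l * emeasure \<mu> B)"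
    proof (intro exI[of _ "1/a"] conjI ballI)
      show "0 \<le> 1/a" using ab by simp
      fix B :: "real set" assume B: "B \<in> sets borel"
      have B2: "\<rho> g -` B \<in> sets borel" using measurable_sets[OF rm B] by simp
      have qB: "q -` B \<in> sets borel" using measurable_sets[OF qm B] by simp
      have "q -` (\<rho> g -` B) = (\<lambda>x. a*x+b) -` (q -` B)"
        using key[of g] ab by auto
      thus "emeasure \<mu> (\<rho> g -` B) = ennreal (1/a) * emeasure \<mu> B"
        using em[OF B] em[OF B2] aff_meas[OF ab(1) qB, of b] by simp
    qed
  qed
  have lf: "locally_finite_borel_measure \<mu>"
    unfolding locally_finite_borel_measure_def
  proof (intro conjI allI impI)
    show "sets \<mu> = sets borel" by (simp add: \<mu>_def)
    fix K :: "real set" assume "compact K"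
    then obtain r where r: "\<forall>x\<in>K. \<bar>x\<bar> \<le> r"
      using compact_imp_bounded bounded_real by blast
    have sub: "q -` K \<subseteq> {c (-r-1)..c (r+1)}"
    proof
      fix y assume "y \<in> q -` K"
      hence qy: "\<bar>q y\<bar> \<le> r" using r by auto
      have "Inf (S y) < r+1" using qy by (simp add: q_def)
      then obtain x where x: "x \<in> S y" "x < r+1" using Sne by (meson cInf_lessD)
      hence "y \<le> c (r+1)" using assms(3) by (simp add: S_def) (meson monoD less_imp_le order_trans)
      moreover have "c (-r-1) < y"
      proof (rule ccontr)
        assume "\<not> c (-r-1) < y"
        hence "-r-1 \<in> S y" by (simp add: S_def)
        hence "q y \<le> -r-1" unfolding q_def using Sbdd by (simp add: cInf_lower)
        thus False using qy by simp
      qed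
      ultimately show "y \<in> {c (-r-1)..c (r+1)}" by simp
    qed
    have "K \<in> sets borel" using \<open>compact K\<close> by (simp add: compact_imp_closed borel_closed)
    hence "emeasure \<mu> K = emeasure lborel (q -` K)" using em by simp
    also have "\<dots> \<le> emeasure lborel {c (-r-1)..c (r+1)}" using sub by (intro emeasure_mono) auto
    also have "\<dots> < \<infinity>" by (cases "c (-r-1) \<le> c (r+1)") auto
    finally show "emeasure \<mu> K < \<infinity>" .
  qed
  have "emeasure \<mu> UNIV = \<infinity>" using em[of UNIV] by simp
  thus ?thesis using lf qp by auto
qed
end
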